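(* Let $\sigma>0$, $\bar\gamma>0$, $c_\infty\ge0$, and for $\gamma\in(0,\bar\gamma]$ let $\tau_\gamma:[0,\infty)\to[0,\infty)$ be non-decreasing with $\tau_\gamma(0)=0$, and assume there exist $R_1,L\ge0$, $m>0$ such that for all $\gamma\in(0,\bar\gamma]$, $\sup_{r>0}\tau_\gamma(r)/r\le1+\gamma L$ and $\sup_{r>R_1}\tau_\gamma(r)/r\le1-\gamma m$. Let $Q_\gamma$ be the Markov kernel on $[0,\infty)$ $$Q_\gamma(w,A)=\delta_0(A)\int_{\mathbb{R}}\bar p_{\sigma^2\gamma}(\tau_\gamma(w)+\gamma c_\infty,g)\varphi(g)dg+\int_{\mathbb{R}}\mathbb{1}_A(\tau_\gamma(w)+\gamma c_\infty-2\sigma\gamma^{1/2}g)\{1-\bar p_{\sigma^2\gamma}(\tau_\gamma(w)+\gamma c_\infty,g)\}\varphi(g)dg,$$ where $\bar p_{\sigma^2\gamma}(a,g)=1\wedge\varphi_{\sigma^2\gamma}(a-\sigma\sqrt\gamma g)/\varphi_{\sigma^2\gamma}(\sigma\sqrt\gamma g)$. Let $\mathcal V_1^*(w)=w$. Then for all $\gamma\in(0,\bar\gamma]$ and $w\ge0$, $$Q_\gamma\mathcal V_1^*(w)\le(1-\gamma m)\mathcal V_1^*(w)\mathbb{1}_{(R_1,\infty)}(w)+(1+\gamma L)\mathcal V_1^*(w)\mathbb{1}_{(0,R_1]}(w)+\gamma c_\infty.$$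
   Context: $\varphi$ is the standard normal density and $\varphi_s(t)=(2\pi s)^{-1/2}e^{-t^2/(2s)}$. *)

theory Defs
  imports "HOL-Analysis.Analysis"
begin

definition gauss_dens :: "real \<Rightarrow> real \<Rightarrow> real" where
  "gauss_dens s t = 1 / sqrt (2 * pi * s) * exp (- t\<^sup>2 / (2 * s))"

definition std_gauss :: "real \<Rightarrow> real" where
  "std_gauss t = gauss_dens 1 t"

definition pbar :: "real \<Rightarrow> real \<Rightarrow> real \<Rightarrow> real \<Rightarrow> real" where
  "pbar \<sigma> \<gamma> a g = min 1 (gauss_dens (\<sigma>\<^sup>2 * \<gamma>) (a - \<sigma> * sqrt \<gamma> * g)
                            / gauss_dens (\<sigma>\<^sup>2 * \<gamma>) (\<sigma> * sqrt \<gamma> * g))"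

text \<open>The Markov kernel Q_gamma applied to a function f (i.e. the integral of f against
  Q_gamma(w, .)): the Dirac part at 0 contributes f 0 times its mass.\<close>
definition Qop :: "real \<Rightarrow> real \<Rightarrow> real \<Rightarrow> (real \<Rightarrow> real) \<Rightarrow> (real \<Rightarrow> real) \<Rightarrow> real \<Rightarrow> real" where
  "Qop \<sigma> c_inf \<gamma> \<tau> f w =
     (let a = \<tau> w + \<gamma> * c_inf in
       f 0 * (LINT g|lborel. pbar \<sigma> \<gamma> a g * std_gauss g)
       + (LINT g|lborel. f (a - 2 * \<sigma> * sqrt \<gamma> * g) * (1 - pbar \<sigma> \<gamma> a g) * std_gauss g))"

definition V1star :: "real \<Rightarrow> real" where
  "V1star w = w"

end

theory Submission imports Defs "HOL-Probability.Probability" begin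

lemma min1_mult: "(0::real) \<le> p \<Longrightarrow> min 1 R * p = min p (R * p)"
  by (simp add: min_mult_distrib_right)

lemma pbar_eq:
  fixes \<sigma> \<gamma> a g :: real
  assumes "\<sigma> > 0" "\<gamma> > 0"
  defines "s \<equiv> \<sigma> * sqrt \<gamma>"
  shows "pbar \<sigma> \<gamma> a g * std_gauss g = min (std_gauss g) (std_gauss (g - a / s))"
proof -
  have s: "s > 0" using assms by (simp add: s_def)
  have s2: "\<sigma>\<^sup>2 * \<gamma> = s\<^sup>2" using assms by (simp add: s_def power_mult_distrib)
  have R: "gauss_dens (\<sigma>\<^sup>2 * \<gamma>) (a - \<sigma> * sqrt \<gamma> * g) / gauss_dens (\<sigma>\<^sup>2 * \<gamma>) (\<sigma> * sqrt \<gamma> * g)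
      = exp (- (g - a/s)\<^sup>2 / 2 + g\<^sup>2 / 2)"
  proof -
    have "gauss_dens (\<sigma>\<^sup>2 * \<gamma>) (a - \<sigma> * sqrt \<gamma> * g) / gauss_dens (\<sigma>\<^sup>2 * \<gamma>) (\<sigma> * sqrt \<gamma> * g)
       = exp (- (a - s * g)\<^sup>2 / (2 * s\<^sup>2)) / exp (- (s*g)\<^sup>2 / (2 * s\<^sup>2))"
      unfolding gauss_dens_def s2 s_def[symmetric] using s by simp
    also have "\<dots> = exp (- (a - s * g)\<^sup>2 / (2 * s\<^sup>2) + (s*g)\<^sup>2 / (2 * s\<^sup>2))"
      by (simp add: exp_diff[symmetric])
    also have "- (a - s * g)\<^sup>2 / (2 * s\<^sup>2) + (s*g)\<^sup>2 / (2 * s\<^sup>2) = - (g - a/s)\<^sup>2 / 2 + g\<^sup>2 / 2"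
      using s by (simp add: field_simps power2_eq_square)
    finally show ?thesis .
  qed
  have "exp (- (g - a/s)\<^sup>2 / 2 + g\<^sup>2 / 2) * std_gauss g = std_gauss (g - a/s)"
    unfolding std_gauss_def gauss_dens_def by (simp add: exp_add[symmetric])
  moreover have "std_gauss g \<ge> 0" unfolding std_gauss_def gauss_dens_def by simp
  ultimately show ?thesis unfolding pbar_def R min1_mult[OF \<open>std_gauss g \<ge> 0\<close>]
    by simp
qed

lemma sg: "std_gauss = std_normal_density"
  by (auto simp: fun_eq_iff std_gauss_def gauss_dens_def std_normal_density_def)


lemma Qop_eq:
  fixes \<sigma> \<gamma> c :: real and t :: "real \<Rightarrow> real"
  assumes "\<sigma> > 0" "\<gamma> > 0"
  shows "Qop \<sigma> c \<gamma> t V1star w = t w + \<gamma> * c"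
proof -
  define a where "a = t w + \<gamma> * c"
  define s where "s = \<sigma> * sqrt \<gamma>"
  define b where "b = a / s"
  define h where "h g = min (std_gauss g) (std_gauss (g - b))" for g
  have s: "s > 0" using assms by (simp add: s_def)
  have sb: "s * b = a" using s by (simp add: b_def)
  have p: "pbar \<sigma> \<gamma> a g * std_gauss g = h g" for g
    using pbar_eq[OF assms, of a g] by (simp add: h_def b_def s_def)
  have eq: "V1star (a - 2 * \<sigma> * sqrt \<gamma> * g) * (1 - pbar \<sigma> \<gamma> a g) * std_gauss g
      = a * std_normal_density g - (2 * s) * (std_normal_density g * g ^ 1) - (a - 2 * s * g) * h g" for g
  proof -
    have "V1star (a - 2 * \<sigma> * sqrt \<gamma> * g) * (1 - pbar \<sigma> \<gamma> a g) * std_gauss g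
       = (a - 2 * s * g) * std_gauss g - (a - 2 * s * g) * h g"
      by (simp add: V1star_def s_def p[symmetric] algebra_simps)
    then show ?thesis unfolding sg by (simp add: algebra_simps)
  qed
  have i0: "integrable lborel std_normal_density"
    using integrable_std_normal_moment[of 0] by simp
  have i1: "integrable lborel (\<lambda>g. std_normal_density g * g ^ 1)"
    using integrable_std_normal_moment[of 1] .
  have I0: "(LINT g|lborel. std_normal_density g) = 1"
    using integral_std_normal_moment_even[of 0] by simp
  have I1: "(LINT g|lborel. std_normal_density g * g ^ 1) = 0"
    using integral_std_normal_moment_odd[of 0] by simp
  have hmeas: "(\<lambda>g. (a - 2 * s * g) * h g) \<in> borel_measurable lborel"
    unfolding h_def std_gauss_def gauss_dens_def by measurable
  have hb: "norm ((a - 2 * s * g) * h g) \<le> norm ((a - 2 * s * g) * std_normal_density g)" for g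
  proof -
    have "0 \<le> h g" "h g \<le> std_normal_density g"
      unfolding h_def sg by auto
    then show ?thesis by (simp add: abs_mult mult_left_mono)
  qed
  have i2: "integrable lborel (\<lambda>g. (a - 2 * s * g) * std_normal_density g)"
  proof -
    have "integrable lborel (\<lambda>g. a * std_normal_density g - (2 * s) * (std_normal_density g * g ^ 1))"
      using i0 i1 by auto
    then show ?thesis by (simp add: algebra_simps)
  qed
  have ih: "integrable lborel (\<lambda>g. (a - 2 * s * g) * h g)"
    by (rule Bochner_Integration.integrable_bound[OF i2 hmeas]) (use hb in auto)
  define F where "F g = (a - 2 * s * g) * h g" for g
  have Fr: "F (b + -1 * x) = - F x" for x
  proof -
    have "h (b - x) = h x" unfolding h_def std_gauss_def gauss_dens_def
      by (simp add: min.commute power2_commute)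
    moreover have "a - 2 * s * (b - x) = - (a - 2 * s * x)" using sb by (simp add: algebra_simps)
    ultimately have "(a - 2 * s * (b - x)) * h (b - x) = (- (a - 2 * s * x)) * h x"
      by simp
    moreover have "F (b + -1 * x) = (a - 2 * s * (b - x)) * h (b - x)" by (simp add: F_def)
    ultimately show ?thesis by (simp add: F_def algebra_simps)
  qed
  have "(LINT g|lborel. F g) = \<bar>-1\<bar> *\<^sub>R (LINT x|lborel. F (b + -1 * x))"
    by (rule lborel_integral_real_affine) simp
  also have "\<dots> = - (LINT x|lborel. F x)" unfolding Fr by simp
  finally have IF: "(LINT g|lborel. F g) = 0" by simp
  have "Qop \<sigma> c \<gamma> t V1star w = (LINT g|lborel. V1star (a - 2 * \<sigma> * sqrt \<gamma> * g) * (1 - pbar \<sigma> \<gamma> a g) * std_gauss g)"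
    unfolding Qop_def a_def[symmetric] by (simp add: V1star_def)
  also have "\<dots> = (LINT g|lborel. a * std_normal_density g - (2 * s) * (std_normal_density g * g ^ 1) - F g)"
    unfolding eq F_def ..
  also have "\<dots> = a"
    using i0 i1 ih I0 I1 IF unfolding F_def by simp
  finally show ?thesis by (simp add: a_def)
qed

theorem proposition8:
  fixes \<sigma> \<gamma>bar c_inf R\<^sub>1 L m :: real
    and \<tau> :: "real \<Rightarrow> real \<Rightarrow> real"
  assumes "\<sigma> > 0" and "\<gamma>bar > 0" and "c_inf \<ge> 0"
    and "R\<^sub>1 \<ge> 0" and "L \<ge> 0" and "m > 0"
    and tau_range: "\<And>\<gamma> r. \<gamma> \<in> {0<..\<gamma>bar} \<Longrightarrow> r \<ge> 0 \<Longrightarrow> \<tau> \<gamma> r \<ge> 0"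
    and tau_mono: "\<And>\<gamma>. \<gamma> \<in> {0<..\<gamma>bar} \<Longrightarrow> mono_on {0..} (\<tau> \<gamma>)"
    and tau_0: "\<And>\<gamma>. \<gamma> \<in> {0<..\<gamma>bar} \<Longrightarrow> \<tau> \<gamma> 0 = 0"
    and tau_L: "\<And>\<gamma>. \<gamma> \<in> {0<..\<gamma>bar} \<Longrightarrow> \<forall>r>0. \<tau> \<gamma> r / r \<le> 1 + \<gamma> * L"
    and tau_m: "\<And>\<gamma>. \<gamma> \<in> {0<..\<gamma>bar} \<Longrightarrow> \<forall>r>R\<^sub>1. \<tau> \<gamma> r / r \<le> 1 - \<gamma> * m"
  shows "\<forall>\<gamma>\<in>{0<..\<gamma>bar}. \<forall>w\<ge>0.
           Qop \<sigma> c_inf \<gamma> (\<tau> \<gamma>) V1star w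
             \<le> (1 - \<gamma> * m) * V1star w * indicator {R\<^sub>1<..} w
               + (1 + \<gamma> * L) * V1star w * indicator {0<..R\<^sub>1} w + \<gamma> * c_inf"
proof (intro ballI allI impI)
  fix \<gamma> w :: real
  assume g: "\<gamma> \<in> {0<..\<gamma>bar}" and w: "w \<ge> 0"
  have Q: "Qop \<sigma> c_inf \<gamma> (\<tau> \<gamma>) V1star w = \<tau> \<gamma> w + \<gamma> * c_inf"
    using Qop_eq[OF \<open>\<sigma> > 0\<close>] g by simp
  show "Qop \<sigma> c_inf \<gamma> (\<tau> \<gamma>) V1star w
             \<le> (1 - \<gamma> * m) * V1star w * indicator {R\<^sub>1<..} w
               + (1 + \<gamma> * L) * V1star w * indicator {0<..R\<^sub>1} w + \<gamma> * c_inf"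
  proof (cases "w = 0")
    case True
    then show ?thesis using Q tau_0[OF g] by (simp add: V1star_def)
  next
    case False
    then have wp: "w > 0" using w by simp
    show ?thesis
    proof (cases "w > R\<^sub>1")
      case True
      have "\<tau> \<gamma> w / w \<le> 1 - \<gamma> * m" using tau_m[OF g] True by blast
      then have "\<tau> \<gamma> w \<le> (1 - \<gamma> * m) * w" using wp by (simp add: divide_le_eq)
      then show ?thesis using Q True by (simp add: V1star_def)
    next
      case False
      have "\<tau> \<gamma> w / w \<le> 1 + \<gamma> * L" using tau_L[OF g] wp by blast
      then have "\<tau> \<gamma> w \<le> (1 + \<gamma> * L) * w" using wp by (simp add: divide_le_eq)
      then show ?thesis using Q False wp by (simp add: V1star_def)
    qed
  qed
qed

end
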